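(* For all processes $s,t$, $\mathbf{d}_T(s,t)=\sup_{\Psi\in\mathcal{L}^d}\left|[\![\Psi]\!](s)-[\![\Psi]\!](t)\right|$, where $[\![\Psi]\!](u)=1-D(\Psi,\mathcal{L}(u))$.
   Context: PTS $(\mathcal{S},A,\to)$ with finitely supported distributions; processes image-finite and finite. Computations $c=s_0\xrightarrow{a_1}\cdots\xrightarrow{a_n}s_n$ via transitions $s_{i-1}\xrightarrow{a_i}\pi_i$, $s_i\in\mathrm{supp}(\pi_i)$; $\Pr(c)=\prod\pi_i(s_i)$; $|c|=n$; $\mathrm{tr}(c)=a_1\cdots a_n$; maximal = not a proper prefix of another computation from the same process; $\mathcal{C}_{\max}(z)$, $\mathcal{C}_{\max}(z,\alpha)$ those with trace $\alpha$; $\Pr$ of a set is the sum. A resolution of $s$ is a PTS $\mathcal{Z}=(Z,A,\to_{\mathcal{Z}})$ with $\mathrm{corr}\colon Z\to\mathcal{S}$ and initial state $z_s$, $\mathrm{corr}(z_s)=s$, such that $z_s$ is in no target support, every other state is in the support of a target of a transition from a different state, every $z\xrightarrow{a}_{\mathcal{Z}}\pi$ is matched by $\mathrm{corr}(z)\xrightarrow{a}\pi'$ with $\pi(z')=\pi'(\mathrm{corr}(z'))$, and each state has at most one outgoing transition; $\mathrm{res}(s)$ the set of resolutions. $TD_{\mathcal{Z}}(\alpha)=\Pr(\mathcal{C}_{\max}(z,\alpha))$. Kantorovich lifting $\mathcal{K}(d)(\pi,\pi')=\min_\omega\sum\omega(x,y)d(x,y)$ over couplings; Hausdorff lifting $\mathcal{H}(\hat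 d)(X,Y)=\max\{\sup_{x\in X}\inf_{y\in Y}\hat d(x,y),\sup_{y\in Y}\inf_{x\in X}\hat d(y,x)\}$ ($\inf\emptyset=1$, $\sup\emptyset=0$). $d_T(\alpha,\beta)=0$ if $\alpha=\beta$ else $1$; $D_T(\mathcal{Z}_1,\mathcal{Z}_2)=\mathcal{K}(d_T)(TD_{\mathcal{Z}_1},TD_{\mathcal{Z}_2})$; strong trace metric $\mathbf{d}_T(s,t)=\mathcal{H}(D_T)(\mathrm{res}(s),\mathrm{res}(t))$. Logic: trace formulae $\Phi::=\top\mid\langle a\rangle\Phi$, $\mathrm{depth}(\top)=0$, $\mathrm{depth}(\langle a\rangle\Phi)=1+\mathrm{depth}(\Phi)$; $\mathcal{L}^d$ is the set of trace distribution formulae $\bigoplus_{i\in I}r_i\Phi_i$ ($I$ finite nonempty, $\Phi_i$ pairwise distinct, $r_i\in(0,1]$, $\sum r_i=1$), identified with distributions on trace formulae. $c\models\top$ always; $c\models\langle a\rangle\Phi$ iff $c=s\xrightarrow{a}c'$ with $c'\models\Phi$. $s\models\bigoplus_i r_i\Phi_i$ iff some $\mathcal{Z}\in\mathrm{res}(s)$ with initial state $z$ satisfies $\Pr(\{c\in\mathcal{C}_{\max}(z):c\models\Phi_i,|c|=\mathrm{depth}(\Phi_i)\})=r_i$ for all $i$; $\mathcal{L}(s)$ the set of formulae in $\mathcal{L}^d$ satisfied by $s$. $d(\Phi_1,\Phi_2)=0$ if equal, else 1; $D=\mathcal{K}(d)$ on $\mathcal{L}^d$; $D(\Psi,\mathcal{L}')=\inf_{\Psi'\in\mathcal{L}'}D(\Psi,\Psi')$.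 *)

theory Defs
  imports "HOL-Probability.Probability"
begin

text \<open>A PTS over states of type 's and actions of type 'a is given by its transition
relation: a set of triples (s, a, pi) meaning s --a--> pi.\<close>

type_synonym ('s, 'a) pts = "('s \<times> 'a \<times> 's pmf) set"

definition pts_fin_supp :: "('s, 'a) pts \<Rightarrow> bool" where
  "pts_fin_supp tr \<longleftrightarrow> (\<forall>(u, a, \<pi>) \<in> tr. finite (set_pmf \<pi>))"

definition step_rel :: "('s, 'a) pts \<Rightarrow> ('s \<times> 's) set" where
  "step_rel tr = {(u, v). \<exists>a \<pi>. (u, a, \<pi>) \<in> tr \<and> v \<in> set_pmf \<pi>}"

definition finite_process :: "('s, 'a) pts \<Rightarrow> 's \<Rightarrow> bool" where
  "finite_process tr s \<longleftrightarrow>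
     (\<forall>u. (s, u) \<in> (step_rel tr)\<^sup>* \<longrightarrow> finite {(a, \<pi>). (u, a, \<pi>) \<in> tr}) \<and>
     \<not> (\<exists>f. f 0 = s \<and> (\<forall>n. (f n, f (Suc n)) \<in> step_rel tr))"

fun is_comp :: "('s, 'a) pts \<Rightarrow> 's \<Rightarrow> ('a \<times> 's pmf \<times> 's) list \<Rightarrow> bool" where
  "is_comp tr z [] = True"
| "is_comp tr z ((a, \<pi>, z') # c) = ((z, a, \<pi>) \<in> tr \<and> z' \<in> set_pmf \<pi> \<and> is_comp tr z' c)"

definition comp_prob :: "('a \<times> 's pmf \<times> 's) list \<Rightarrow> real" where
  "comp_prob c = (\<Prod>i<length c. (case c ! i of (a, \<pi>, z') \<Rightarrow> pmf \<pi> z'))"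

definition comp_trace :: "('a \<times> 's pmf \<times> 's) list \<Rightarrow> 'a list" where
  "comp_trace c = map fst c"

definition is_max_comp :: "('s, 'a) pts \<Rightarrow> 's \<Rightarrow> ('a \<times> 's pmf \<times> 's) list \<Rightarrow> bool" where
  "is_max_comp tr z c \<longleftrightarrow> is_comp tr z c \<and> \<not> (\<exists>d. d \<noteq> [] \<and> is_comp tr z (c @ d))"

definition Cmax :: "('s, 'a) pts \<Rightarrow> 's \<Rightarrow> ('a \<times> 's pmf \<times> 's) list set" where
  "Cmax tr z = {c. is_max_comp tr z c}"

definition Cmax_tr :: "('s, 'a) pts \<Rightarrow> 's \<Rightarrow> 'a list \<Rightarrow> ('a \<times> 's pmf \<times> 's) list set" where
  "Cmax_tr tr z \<alpha> = {c \<in> Cmax tr z. comp_trace c = \<alpha>}"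

definition set_prob :: "('a \<times> 's pmf \<times> 's) list set \<Rightarrow> real" where
  "set_prob C = (\<Sum>c\<in>C. comp_prob c)"

text \<open>A resolution: (set of states Z, transition relation, corr, initial state).
Resolution states are represented by natural numbers.\<close>
type_synonym ('s, 'a) resolution = "nat set \<times> (nat, 'a) pts \<times> (nat \<Rightarrow> 's) \<times> nat"

definition is_resolution :: "('s, 'a) pts \<Rightarrow> 's \<Rightarrow> ('s, 'a) resolution \<Rightarrow> bool" where
  "is_resolution tr s R \<longleftrightarrow> (case R of (Z, trZ, corr, z0) \<Rightarrow>
     z0 \<in> Z \<and> corr z0 = s \<and>
     (\<forall>(z, a, \<pi>) \<in> trZ. z \<in> Z \<and> set_pmf \<pi> \<subseteq> Z) \<and>
     (\<forall>(z, a, \<pi>) \<in> trZ. z0 \<notin> set_pmf \<pi>) \<and>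
     (\<forall>z \<in> Z. z \<noteq> z0 \<longrightarrow> (\<exists>z' a \<pi>. (z', a, \<pi>) \<in> trZ \<and> z' \<noteq> z \<and> z \<in> set_pmf \<pi>)) \<and>
     (\<forall>(z, a, \<pi>) \<in> trZ. \<exists>\<pi>'. (corr z, a, \<pi>') \<in> tr \<and>
         (\<forall>z' \<in> set_pmf \<pi>. pmf \<pi> z' = pmf \<pi>' (corr z'))) \<and>
     (\<forall>z a \<pi> b \<rho>. (z, a, \<pi>) \<in> trZ \<longrightarrow> (z, b, \<rho>) \<in> trZ \<longrightarrow> a = b \<and> \<pi> = \<rho>))"

definition res :: "('s, 'a) pts \<Rightarrow> 's \<Rightarrow> ('s, 'a) resolution set" where
  "res tr s = {R. is_resolution tr s R}"

definition res_trans :: "('s, 'a) resolution \<Rightarrow> (nat, 'a) pts" where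
  "res_trans R = fst (snd R)"

definition res_init :: "('s, 'a) resolution \<Rightarrow> nat" where
  "res_init R = snd (snd (snd R))"

definition TD :: "('s, 'a) resolution \<Rightarrow> 'a list \<Rightarrow> real" where
  "TD R \<alpha> = set_prob (Cmax_tr (res_trans R) (res_init R) \<alpha>)"

definition is_coupling :: "('x \<Rightarrow> real) \<Rightarrow> ('y \<Rightarrow> real) \<Rightarrow> ('x \<times> 'y \<Rightarrow> real) \<Rightarrow> bool" where
  "is_coupling \<mu> \<nu> \<omega> \<longleftrightarrow> finite {p. \<omega> p \<noteq> 0} \<and> (\<forall>p. 0 \<le> \<omega> p) \<and>
     (\<forall>x. (\<Sum>y\<in>{y. \<omega> (x, y) \<noteq> 0}. \<omega> (x, y)) = \<mu> x) \<and>
     (\<forall>y. (\<Sum>x\<in>{x. \<omega> (x, y) \<noteq> 0}. \<omega> (x, y)) = \<nu> y)"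

definition kantorovich :: "('x \<Rightarrow> 'x \<Rightarrow> real) \<Rightarrow> ('x \<Rightarrow> real) \<Rightarrow> ('x \<Rightarrow> real) \<Rightarrow> real" where
  "kantorovich d \<mu> \<nu> =
     Inf {(\<Sum>p\<in>{p. \<omega> p \<noteq> 0}. \<omega> p * d (fst p) (snd p)) | \<omega>. is_coupling \<mu> \<nu> \<omega>}"

definition inf1 :: "real set \<Rightarrow> real" where
  "inf1 S = (if S = {} then 1 else Inf S)"

definition sup0 :: "real set \<Rightarrow> real" where
  "sup0 S = (if S = {} then 0 else Sup S)"

definition hausdorff :: "('x \<Rightarrow> 'x \<Rightarrow> real) \<Rightarrow> 'x set \<Rightarrow> 'x set \<Rightarrow> real" where
  "hausdorff d X Y = max (sup0 ((\<lambda>x. inf1 ((\<lambda>y. d x y) ` Y)) ` X))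
                         (sup0 ((\<lambda>y. inf1 ((\<lambda>x. d y x) ` X)) ` Y))"

definition d_trace :: "'a list \<Rightarrow> 'a list \<Rightarrow> real" where
  "d_trace \<alpha> \<beta> = (if \<alpha> = \<beta> then 0 else 1)"

definition D_T :: "('s, 'a) resolution \<Rightarrow> ('s, 'a) resolution \<Rightarrow> real" where
  "D_T R1 R2 = kantorovich d_trace (TD R1) (TD R2)"

definition strong_trace_metric :: "('s, 'a) pts \<Rightarrow> 's \<Rightarrow> 's \<Rightarrow> real" where
  "strong_trace_metric tr s t = hausdorff D_T (res tr s) (res tr t)"

datatype 'a tformula = TTop | Diam 'a "'a tformula"

fun depth :: "'a tformula \<Rightarrow> nat" where
  "depth TTop = 0"
| "depth (Diam a \<Phi>) = Suc (depth \<Phi>)"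

fun comp_sat :: "('a \<times> 's pmf \<times> 's) list \<Rightarrow> 'a tformula \<Rightarrow> bool" where
  "comp_sat c TTop = True"
| "comp_sat [] (Diam a \<Phi>) = False"
| "comp_sat ((b, \<pi>, z) # c) (Diam a \<Phi>) = (b = a \<and> comp_sat c \<Phi>)"

definition Ld :: "'a tformula pmf set" where
  "Ld = {\<Psi>. finite (set_pmf \<Psi>)}"

definition sat_dist :: "('s, 'a) pts \<Rightarrow> 's \<Rightarrow> 'a tformula pmf \<Rightarrow> bool" where
  "sat_dist tr s \<Psi> \<longleftrightarrow> (\<exists>R \<in> res tr s. \<forall>\<Phi> \<in> set_pmf \<Psi>.
      set_prob {c \<in> Cmax (res_trans R) (res_init R). comp_sat c \<Phi> \<and> length c = depth \<Phi>}
        = pmf \<Psi> \<Phi>)"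

definition Lsat :: "('s, 'a) pts \<Rightarrow> 's \<Rightarrow> 'a tformula pmf set" where
  "Lsat tr s = {\<Psi> \<in> Ld. sat_dist tr s \<Psi>}"

definition d_form :: "'a tformula \<Rightarrow> 'a tformula \<Rightarrow> real" where
  "d_form \<Phi>1 \<Phi>2 = (if \<Phi>1 = \<Phi>2 then 0 else 1)"

definition D_form :: "'a tformula pmf \<Rightarrow> 'a tformula pmf \<Rightarrow> real" where
  "D_form \<Psi>1 \<Psi>2 = kantorovich d_form (pmf \<Psi>1) (pmf \<Psi>2)"

definition D_set :: "'a tformula pmf \<Rightarrow> 'a tformula pmf set \<Rightarrow> real" where
  "D_set \<Psi> L = inf1 ((\<lambda>\<Psi>'. D_form \<Psi> \<Psi>') ` L)"

definition sem :: "('s, 'a) pts \<Rightarrow> 'a tformula pmf \<Rightarrow> 's \<Rightarrow> real" where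
  "sem tr \<Psi> u = 1 - D_set \<Psi> (Lsat tr u)"

end

theory Submission imports Defs begin


lemma coupling_supp:
  assumes c: "is_coupling \<mu> \<nu> \<omega>" and S: "\<And>x. x \<notin> S \<Longrightarrow> \<mu> x = 0" "\<And>x. x \<notin> S \<Longrightarrow> \<nu> x = 0"
    and p: "\<omega> (x, y) \<noteq> 0"
  shows "x \<in> S \<and> y \<in> S"
proof -
  from c have fin: "finite {p. \<omega> p \<noteq> 0}" and nn: "\<And>p. 0 \<le> \<omega> p"
    and r: "\<And>x. (\<Sum>y\<in>{y. \<omega> (x, y) \<noteq> 0}. \<omega> (x, y)) = \<mu> x"
    and cc: "\<And>y. (\<Sum>x\<in>{x. \<omega> (x, y) \<noteq> 0}. \<omega> (x, y)) = \<nu> y"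
    unfolding is_coupling_def by auto
  have f1: "finite {y. \<omega> (x, y) \<noteq> 0}"
    by (rule finite_subset[OF _ finite_imageI[OF fin, of snd]]) (auto intro: image_eqI[where x="(x,_)"])
  have f2: "finite {x. \<omega> (x, y) \<noteq> 0}"
    by (rule finite_subset[OF _ finite_imageI[OF fin, of fst]]) (auto intro: image_eqI[where x="(_,y)"])
  have "\<omega> (x,y) \<le> \<mu> x" unfolding r[symmetric]
    by (rule member_le_sum) (use p nn f1 in auto)
  moreover have "\<omega> (x,y) \<le> \<nu> y" unfolding cc[symmetric]
    by (rule member_le_sum) (use p nn f2 in auto)
  ultimately show ?thesis using S p nn[of "(x,y)"] by force
qed

lemma coupling_cost:
  assumes c: "is_coupling \<mu> \<nu> \<omega>" and S: "finite S" "\<And>x. x \<notin> S \<Longrightarrow> \<mu> x = 0" "\<And>x. x \<notin> S \<Longrightarrow> \<nu> x = 0"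
    and s1: "sum \<mu> S = 1"
  shows "(\<Sum>p\<in>{p. \<omega> p \<noteq> 0}. \<omega> p * (if fst p = snd p then 0 else 1)) = 1 - (\<Sum>x\<in>S. \<omega> (x,x))"
proof -
  from c have r: "\<And>x. (\<Sum>y\<in>{y. \<omega> (x, y) \<noteq> 0}. \<omega> (x, y)) = \<mu> x"
    unfolding is_coupling_def by auto
  have sub: "{p. \<omega> p \<noteq> 0} \<subseteq> S \<times> S" using coupling_supp[OF c S(2,3)] by auto
  have "(\<Sum>p\<in>{p. \<omega> p \<noteq> 0}. \<omega> p * (if fst p = snd p then 0 else 1))
      = (\<Sum>p\<in>S \<times> S. \<omega> p * (if fst p = snd p then 0 else 1))"
    by (rule sum.mono_neutral_left) (use sub S in auto)
  also have "\<dots> = (\<Sum>x\<in>S. \<Sum>y\<in>S. \<omega> (x,y) * (if x = y then 0 else 1))"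
    by (simp add: sum.cartesian_product split_def)
  also have "\<dots> = (\<Sum>x\<in>S. \<mu> x - \<omega> (x,x))"
  proof (rule sum.cong[OF refl])
    fix x assume x: "x \<in> S"
    have "(\<Sum>y\<in>S. \<omega> (x,y)) = \<mu> x" unfolding r[symmetric]
      by (rule sum.mono_neutral_right) (use sub S in auto)
    moreover have "(\<Sum>y\<in>S. \<omega> (x,y)) = (\<Sum>y\<in>S. \<omega> (x,y) * (if x = y then 0 else 1)) + \<omega> (x,x)"
    proof -
      have "(\<Sum>y\<in>S. \<omega> (x,y)) = (\<Sum>y\<in>S. \<omega> (x,y) * (if x = y then 0 else 1) + (if x = y then \<omega> (x,y) else 0))"
        by (rule sum.cong) auto
      also have "\<dots> = (\<Sum>y\<in>S. \<omega> (x,y) * (if x = y then 0 else 1)) + \<omega> (x,x)"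
        using x S by (simp add: sum.distrib)
      finally show ?thesis .
    qed
    ultimately show "(\<Sum>y\<in>S. \<omega> (x,y) * (if x = y then 0 else 1)) = \<mu> x - \<omega> (x,x)" by simp
  qed
  also have "\<dots> = 1 - (\<Sum>x\<in>S. \<omega> (x,x))" using s1 by (simp add: sum_subtractf)
  finally show ?thesis .
qed

lemma kantorovich_tv:
  fixes \<mu> \<nu> :: "'x \<Rightarrow> real"
  assumes d: "d = (\<lambda>x y. if x = y then 0 else 1)"
    and S: "finite S" "\<And>x. x \<notin> S \<Longrightarrow> \<mu> x = 0" "\<And>x. x \<notin> S \<Longrightarrow> \<nu> x = 0"
    and nn: "\<And>x. 0 \<le> \<mu> x" "\<And>x. 0 \<le> \<nu> x"
    and s1: "sum \<mu> S = 1" "sum \<nu> S = 1"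
  shows "kantorovich d \<mu> \<nu> = 1 - (\<Sum>x\<in>S. min (\<mu> x) (\<nu> x))"
proof -
  define m where "m x = min (\<mu> x) (\<nu> x)" for x
  define M where "M = (\<Sum>x\<in>S. m x)"
  define r where "r x = \<mu> x - m x" for x
  define r' where "r' x = \<nu> x - m x" for x
  define w where "w p = (if fst p = snd p then m (fst p) else 0) + r (fst p) * r' (snd p) / (1 - M)" for p
  have rnn: "0 \<le> r x" "0 \<le> r' x" for x by (auto simp: r_def r'_def m_def)
  have rz: "r x * r' x = 0" for x by (auto simp: r_def r'_def m_def min_def)
  have mS: "x \<notin> S \<Longrightarrow> m x = 0" "x \<notin> S \<Longrightarrow> r x = 0" "x \<notin> S \<Longrightarrow> r' x = 0" for x
    using S by (auto simp: m_def r_def r'_def)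
  have sr: "sum r S = 1 - M" "sum r' S = 1 - M"
    using s1 by (auto simp: r_def r'_def M_def sum_subtractf)
  have M1: "M \<le> 1" using sr(1) rnn sum_nonneg[of S r] by auto
  have rsum: "(\<Sum>y\<in>S. r x * r' y / (1 - M)) = r x" "(\<Sum>y\<in>S. r y * r' x / (1 - M)) = r' x" for x
  proof -
    show "(\<Sum>y\<in>S. r x * r' y / (1 - M)) = r x"
    proof (cases "M = 1")
      case True
      then have "r x = 0" using sr(1) rnn S mS by (cases "x \<in> S") (auto simp: sum_nonneg_eq_0_iff)
      then show ?thesis by simp
    next
      case False
      then show ?thesis using sr by (simp add: sum_divide_distrib[symmetric] sum_distrib_left[symmetric])
    qed
    show "(\<Sum>y\<in>S. r y * r' x / (1 - M)) = r' x"
    proof (cases "M = 1")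
      case True
      then have "r' x = 0" using sr(2) rnn S mS by (cases "x \<in> S") (auto simp: sum_nonneg_eq_0_iff)
      then show ?thesis by simp
    next
      case False
      then show ?thesis using sr by (simp add: sum_divide_distrib[symmetric] sum_distrib_right[symmetric])
    qed
  qed
  have wnn: "0 \<le> w p" for p using rnn M1 nn by (auto simp: w_def m_def intro!: add_nonneg_nonneg divide_nonneg_nonneg)
  have wsub: "{p. w p \<noteq> 0} \<subseteq> S \<times> S"
  proof
    fix p assume "p \<in> {p. w p \<noteq> 0}"
    then show "p \<in> S \<times> S" using mS[of "fst p"] mS[of "snd p"]
      by (cases p; cases "fst p \<in> S"; cases "snd p \<in> S") (auto simp: w_def split: if_splits)
  qed
  have wrow: "(\<Sum>y\<in>{y. w (x,y) \<noteq> 0}. w (x,y)) = (\<Sum>y\<in>S. w (x,y))" for x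
  proof (cases "x \<in> S")
    case True
    show ?thesis by (rule sum.mono_neutral_left) (use wsub True S in auto)
  next
    case False
    then have "w (x,y) = 0" for y using wsub by auto
    then show ?thesis by simp
  qed
  have wcol: "(\<Sum>x\<in>{x. w (x,y) \<noteq> 0}. w (x,y)) = (\<Sum>x\<in>S. w (x,y))" for y
  proof (cases "y \<in> S")
    case True
    show ?thesis by (rule sum.mono_neutral_left) (use wsub True S in auto)
  next
    case False
    then have "w (x,y) = 0" for x using wsub by auto
    then show ?thesis by simp
  qed
  have split1: "(\<Sum>y\<in>S. w (x,y)) = (if x \<in> S then m x else 0) + (\<Sum>y\<in>S. r x * r' y / (1 - M))" for x
  proof -
    have "(\<Sum>y\<in>S. w (x,y)) = (\<Sum>y\<in>S. (if x = y then m x else 0)) + (\<Sum>y\<in>S. r x * r' y / (1 - M))"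
      unfolding w_def by (intro trans[OF sum.cong sum.distrib]) auto
    then show ?thesis using S(1) by (simp add: sum.delta)
  qed
  have split2: "(\<Sum>x\<in>S. w (x,y)) = (if y \<in> S then m y else 0) + (\<Sum>x\<in>S. r x * r' y / (1 - M))" for y
  proof -
    have "(\<Sum>x\<in>S. w (x,y)) = (\<Sum>x\<in>S. (if x = y then m y else 0)) + (\<Sum>x\<in>S. r x * r' y / (1 - M))"
      unfolding w_def by (intro trans[OF sum.cong sum.distrib]) auto
    then show ?thesis using S(1) by (simp add: sum.delta')
  qed
  have cpl: "is_coupling \<mu> \<nu> w"
    unfolding is_coupling_def
  proof (intro conjI allI)
    show "finite {p. w p \<noteq> 0}" using wsub S by (meson finite_SigmaI finite_subset)
    show "0 \<le> w p" for p by (rule wnn)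
    show "(\<Sum>y\<in>{y. w (x,y) \<noteq> 0}. w (x,y)) = \<mu> x" for x
      unfolding wrow split1 rsum using mS S by (auto simp: r_def)
    show "(\<Sum>x\<in>{x. w (x,y) \<noteq> 0}. w (x,y)) = \<nu> y" for y
      unfolding wcol split2 rsum using mS S by (auto simp: r'_def)
  qed
  have wdiag: "w (x,x) = m x" for x using rz[of x] by (simp add: w_def)
  let ?C = "{(\<Sum>p\<in>{p. \<omega> p \<noteq> 0}. \<omega> p * d (fst p) (snd p)) | \<omega>. is_coupling \<mu> \<nu> \<omega>}"
  have lb: "1 - M \<le> c" if "c \<in> ?C" for c
  proof -
    from that obtain \<omega> where o: "is_coupling \<mu> \<nu> \<omega>"
      and c: "c = (\<Sum>p\<in>{p. \<omega> p \<noteq> 0}. \<omega> p * d (fst p) (snd p))" by blast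
    have "c = 1 - (\<Sum>x\<in>S. \<omega> (x,x))" unfolding c d using coupling_cost[OF o S s1(1)] by simp
    moreover have "\<omega> (x,x) \<le> m x" if "x \<in> S" for x
    proof -
      have "\<omega> (x,x) \<le> \<mu> x \<and> \<omega> (x,x) \<le> \<nu> x"
      proof (cases "\<omega> (x,x) = 0")
        case True then show ?thesis using nn by simp
      next
        case False
        from o have fin: "finite {p. \<omega> p \<noteq> 0}" and onn: "\<And>p. 0 \<le> \<omega> p"
          and r: "\<And>x. (\<Sum>y\<in>{y. \<omega> (x, y) \<noteq> 0}. \<omega> (x, y)) = \<mu> x"
          and cc: "\<And>y. (\<Sum>x\<in>{x. \<omega> (x, y) \<noteq> 0}. \<omega> (x, y)) = \<nu> y"
          unfolding is_coupling_def by auto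
        have f1: "finite {y. \<omega> (x, y) \<noteq> 0}"
          by (rule finite_subset[OF _ finite_imageI[OF fin, of snd]]) (auto intro: image_eqI[where x="(x,_)"])
        have f2: "finite {y. \<omega> (y, x) \<noteq> 0}"
          by (rule finite_subset[OF _ finite_imageI[OF fin, of fst]]) (auto intro: image_eqI[where x="(_,x)"])
        have "\<omega> (x,x) \<le> \<mu> x" unfolding r[symmetric]
          by (rule member_le_sum) (use False onn f1 in auto)
        moreover have "\<omega> (x,x) \<le> \<nu> x" unfolding cc[symmetric]
          by (rule member_le_sum) (use False onn f2 in auto)
        ultimately show ?thesis by simp
      qed
      then show ?thesis by (simp add: m_def)
    qed
    then have "(\<Sum>x\<in>S. \<omega> (x,x)) \<le> M" unfolding M_def by (rule sum_mono)
    ultimately show ?thesis by simp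
  qed
  have inC: "1 - M \<in> ?C"
  proof -
    have "(\<Sum>p\<in>{p. w p \<noteq> 0}. w p * d (fst p) (snd p)) = 1 - M"
      unfolding d using coupling_cost[OF cpl S s1(1)] by (simp add: wdiag M_def)
    then show ?thesis using cpl by force
  qed
  have "Inf ?C = 1 - M"
  proof (rule antisym)
    show "Inf ?C \<le> 1 - M" by (rule cInf_lower[OF inC]) (rule bdd_belowI[where m="1-M"], erule lb)
    show "1 - M \<le> Inf ?C" by (rule cInf_greatest) (use inC lb in auto)
  qed
  then show ?thesis unfolding kantorovich_def M_def m_def .
qed



lemma comp_prob_Nil: "comp_prob [] = 1" by (simp add: comp_prob_def)

lemma comp_prob_Cons: "comp_prob ((a, \<pi>, z) # c) = pmf \<pi> z * comp_prob c"
  unfolding comp_prob_def length_Cons prod.lessThan_Suc_shift by simp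

lemma comp_prob_nonneg: "0 \<le> comp_prob c"
  unfolding comp_prob_def by (auto intro!: prod_nonneg split: prod.splits)

lemma fin_supp:
  assumes "pts_fin_supp tr" "(v, a, \<pi>') \<in> tr" "\<forall>z'\<in>set_pmf \<pi>. pmf \<pi> z' = pmf \<pi>' (corr z')"
  shows "finite (set_pmf \<pi>)"
proof (rule ccontr)
  assume inf: "infinite (set_pmf \<pi>)"
  have fin': "finite (set_pmf \<pi>')" using assms(1,2) unfolding pts_fin_supp_def by auto
  define V where "V = pmf \<pi>' ` set_pmf \<pi>'"
  have Vfin: "finite V" "V \<noteq> {}" using fin' set_pmf_not_empty by (auto simp: V_def)
  define m where "m = Min V"
  have mpos: "0 < m" unfolding m_def using Vfin by (subst Min_gr_iff) (auto simp: V_def pmf_positive)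
  have ge: "m \<le> pmf \<pi> z'" if "z' \<in> set_pmf \<pi>" for z'
  proof -
    have "pmf \<pi> z' > 0" using that by (simp add: pmf_positive)
    then have "corr z' \<in> set_pmf \<pi>'" using assms(3)[rule_format, OF that] by (simp add: set_pmf_iff)
    then have "pmf \<pi> z' \<in> V" using assms(3) that by (auto simp: V_def)
    then show ?thesis unfolding m_def using Vfin by simp
  qed
  obtain n :: nat where n: "1 / m < n" using reals_Archimedean2 by blast
  obtain B where B: "finite B" "card B = n" "B \<subseteq> set_pmf \<pi>" using infinite_arbitrarily_large[OF inf] by blast
  have "n * m \<le> sum (pmf \<pi>) B"
    using sum_mono[of B "\<lambda>_. m" "pmf \<pi>"] ge B by auto
  also have "\<dots> = measure (measure_pmf \<pi>) B" using B by (simp add: measure_measure_pmf_finite)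
  also have "\<dots> \<le> 1" by simp
  finally have "n * m \<le> 1" .
  moreover have "1 < n * m" using n mpos by (simp add: field_simps)
  ultimately show False by simp
qed

lemma is_comp_noT:
  assumes "\<forall>a \<pi>. (z, a, \<pi>) \<notin> trZ" "is_comp trZ z c" shows "c = []"
  using assms by (cases c) auto

lemma Cmax_noT:
  assumes "\<forall>a \<pi>. (z, a, \<pi>) \<notin> trZ" shows "Cmax trZ z = {[]}"
  using is_comp_noT[OF assms] unfolding Cmax_def is_max_comp_def by auto

lemma Cmax_T:
  assumes T: "(z, a, \<pi>) \<in> trZ"
    and U: "\<forall>z a \<pi> b \<rho>. (z, a, \<pi>) \<in> trZ \<longrightarrow> (z, b, \<rho>) \<in> trZ \<longrightarrow> a = b \<and> \<pi> = \<rho>"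
  shows "Cmax trZ z = (\<lambda>(z', c). (a, \<pi>, z') # c) ` (SIGMA z':set_pmf \<pi>. Cmax trZ z')"
proof
  show "Cmax trZ z \<subseteq> (\<lambda>(z', c). (a, \<pi>, z') # c) ` (SIGMA z':set_pmf \<pi>. Cmax trZ z')"
  proof
    fix c assume c: "c \<in> Cmax trZ z"
    obtain z1 where z1: "z1 \<in> set_pmf \<pi>" by (metis all_not_in_conv set_pmf_not_empty)
    have "c \<noteq> []"
    proof
      assume "c = []"
      then have "is_comp trZ z (c @ [(a, \<pi>, z1)])" using T z1 by simp
      then show False using c `c = []` unfolding Cmax_def is_max_comp_def by blast
    qed
    then obtain b \<rho> z' c' where cc: "c = (b, \<rho>, z') # c'" by (metis list.exhaust prod_cases3)
    have ic: "(z, b, \<rho>) \<in> trZ" "z' \<in> set_pmf \<rho>" "is_comp trZ z' c'"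
      using c cc unfolding Cmax_def is_max_comp_def by auto
    then have ba: "b = a" "\<rho> = \<pi>" using U T by blast+
    have "is_max_comp trZ z' c'"
      using c ic unfolding cc Cmax_def is_max_comp_def by auto
    then show "c \<in> (\<lambda>(z', c). (a, \<pi>, z') # c) ` (SIGMA z':set_pmf \<pi>. Cmax trZ z')"
      using cc ba ic unfolding Cmax_def by (auto intro!: image_eqI[where x="(z', c')"])
  qed
next
  show "(\<lambda>(z', c). (a, \<pi>, z') # c) ` (SIGMA z':set_pmf \<pi>. Cmax trZ z') \<subseteq> Cmax trZ z"
    using T unfolding Cmax_def is_max_comp_def by auto
qed

definition rrel :: "('s, 'a) pts \<Rightarrow> ('s \<times> 's) set" where
  "rrel tr = {(v, u). (u, v) \<in> step_rel tr}"

lemma acc_from_finite: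
  assumes "finite_process tr s" shows "s \<in> Wellfounded.acc (rrel tr)"
proof (rule ccontr)
  assume ns: "s \<notin> Wellfounded.acc (rrel tr)"
  define f where "f = rec_nat s (\<lambda>_ x. SOME y. (y, x) \<in> rrel tr \<and> y \<notin> Wellfounded.acc (rrel tr))"
  have f0: "f 0 = s" by (simp add: f_def)
  have fS: "f (Suc n) = (SOME y. (y, f n) \<in> rrel tr \<and> y \<notin> Wellfounded.acc (rrel tr))" for n by (simp add: f_def)
  have *: "f n \<notin> Wellfounded.acc (rrel tr)" for n
  proof (induction n)
    case 0 then show ?case using ns f0 by simp
  next
    case (Suc n)
    then have "\<exists>y. (y, f n) \<in> rrel tr \<and> y \<notin> Wellfounded.acc (rrel tr)" using not_acc_down by metis
    then show ?case unfolding fS by (rule someI2_ex) auto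
  qed
  have "(f n, f (Suc n)) \<in> step_rel tr" for n
  proof -
    have "\<exists>y. (y, f n) \<in> rrel tr \<and> y \<notin> Wellfounded.acc (rrel tr)" using not_acc_down[OF *[of n]] by metis
    then have "(f (Suc n), f n) \<in> rrel tr" unfolding fS by (rule someI2_ex) auto
    then show ?thesis by (simp add: rrel_def)
  qed
  then show False using assms f0 unfolding finite_process_def by blast
qed

lemma Cmax_sum_acc:
  assumes fs: "pts_fin_supp tr"
    and T1: "\<forall>(z, a, \<pi>) \<in> trZ. \<exists>\<pi>'. (corr z, a, \<pi>') \<in> tr \<and> (\<forall>z' \<in> set_pmf \<pi>. pmf \<pi> z' = pmf \<pi>' (corr z'))"
    and U: "\<forall>z a \<pi> b \<rho>. (z, a, \<pi>) \<in> trZ \<longrightarrow> (z, b, \<rho>) \<in> trZ \<longrightarrow> a = b \<and> \<pi> = \<rho>"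
    and acc: "u \<in> Wellfounded.acc (rrel tr)"
  shows "\<forall>z. corr z = u \<longrightarrow> finite (Cmax trZ z) \<and> sum comp_prob (Cmax trZ z) = 1"
proof (rule acc_induct[OF acc, where P="\<lambda>u. \<forall>z. corr z = u \<longrightarrow> finite (Cmax trZ z) \<and> sum comp_prob (Cmax trZ z) = 1"])
  fix u assume hyp: "u \<in> Wellfounded.acc (rrel tr)" "\<forall>y. (y, u) \<in> rrel tr \<longrightarrow> (\<forall>z. corr z = y \<longrightarrow> finite (Cmax trZ z) \<and> sum comp_prob (Cmax trZ z) = 1)"
  show "\<forall>z. corr z = u \<longrightarrow> finite (Cmax trZ z) \<and> sum comp_prob (Cmax trZ z) = 1"
  proof (intro allI impI)
    fix z assume cz: "corr z = u"
    show "finite (Cmax trZ z) \<and> sum comp_prob (Cmax trZ z) = 1"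
    proof (cases "\<exists>a \<pi>. (z, a, \<pi>) \<in> trZ")
      case False
      then show ?thesis by (simp add: Cmax_noT comp_prob_Nil)
    next
      case True
      then obtain a \<pi> where T: "(z, a, \<pi>) \<in> trZ" by blast
      obtain \<pi>' where \<pi>': "(corr z, a, \<pi>') \<in> tr" "\<forall>z' \<in> set_pmf \<pi>. pmf \<pi> z' = pmf \<pi>' (corr z')"
        using T1 T by fastforce
      have fp: "finite (set_pmf \<pi>)" by (rule fin_supp[OF fs \<pi>'])
      have IH: "finite (Cmax trZ z') \<and> sum comp_prob (Cmax trZ z') = 1" if "z' \<in> set_pmf \<pi>" for z'
      proof -
        have "pmf \<pi> z' > 0" using that by (simp add: pmf_positive)
        then have "corr z' \<in> set_pmf \<pi>'" using \<pi>'(2)[rule_format, OF that] by (simp add: set_pmf_iff)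
        then have "(corr z', u) \<in> rrel tr" using \<pi>'(1) cz by (auto simp: rrel_def step_rel_def)
        then show ?thesis using hyp(2) by blast
      qed
      have inj: "inj_on (\<lambda>(z', c). (a, \<pi>, z') # c) (SIGMA z':set_pmf \<pi>. Cmax trZ z')"
        by (auto simp: inj_on_def)
      have fin: "finite (SIGMA z':set_pmf \<pi>. Cmax trZ z')" using fp IH by auto
      have "sum comp_prob (Cmax trZ z) = (\<Sum>p\<in>(SIGMA z':set_pmf \<pi>. Cmax trZ z'). comp_prob ((a, \<pi>, fst p) # snd p))"
        unfolding Cmax_T[OF T U] by (subst sum.reindex[OF inj]) (simp add: split_def)
      also have "\<dots> = (\<Sum>z'\<in>set_pmf \<pi>. \<Sum>c\<in>Cmax trZ z'. pmf \<pi> z' * comp_prob c)"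
        using sum.Sigma[OF fp, of "Cmax trZ" "\<lambda>z' c. pmf \<pi> z' * comp_prob c"] IH by (simp add: split_def comp_prob_Cons)
      also have "\<dots> = (\<Sum>z'\<in>set_pmf \<pi>. pmf \<pi> z')"
        by (rule sum.cong) (use IH in \<open>auto simp: sum_distrib_left[symmetric]\<close>)
      also have "\<dots> = 1" using fp by (simp add: sum_pmf_eq_1)
      finally show ?thesis using fin Cmax_T[OF T U] by simp
    qed
  qed
qed



lemma hausdorff_sup:
  fixes \<delta> :: "'p \<Rightarrow> 'p \<Rightarrow> real"
  assumes XM: "X \<subseteq> M" and YM: "Y \<subseteq> M" and Xne: "X \<noteq> {}" and Yne: "Y \<noteq> {}"
    and refl: "\<And>x. x \<in> M \<Longrightarrow> \<delta> x x = 0"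
    and nn: "\<And>x y. x \<in> M \<Longrightarrow> y \<in> M \<Longrightarrow> 0 \<le> \<delta> x y"
    and le1: "\<And>x y. x \<in> M \<Longrightarrow> y \<in> M \<Longrightarrow> \<delta> x y \<le> 1"
    and tri: "\<And>x y z. x \<in> M \<Longrightarrow> y \<in> M \<Longrightarrow> z \<in> M \<Longrightarrow> \<delta> x z \<le> \<delta> x y + \<delta> y z"
  shows "hausdorff \<delta> X Y = (SUP p\<in>M. \<bar>(1 - inf1 (\<delta> p ` X)) - (1 - inf1 (\<delta> p ` Y))\<bar>)"
proof -
  define dX where "dX p = Inf (\<delta> p ` X)" for p
  define dY where "dY p = Inf (\<delta> p ` Y)" for p
  have Mne: "M \<noteq> {}" using XM Xne by auto
  have bX: "bdd_below (\<delta> p ` X)" if "p \<in> M" for p using nn that XM by (auto intro!: bdd_belowI[where m=0])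
  have bY: "bdd_below (\<delta> p ` Y)" if "p \<in> M" for p using nn that YM by (auto intro!: bdd_belowI[where m=0])
  have dXle: "dX p \<le> \<delta> p x" if "p \<in> M" "x \<in> X" for p x
    unfolding dX_def using bX[OF that(1)] that by (auto intro: cInf_lower)
  have dYle: "dY p \<le> \<delta> p y" if "p \<in> M" "y \<in> Y" for p y
    unfolding dY_def using bY[OF that(1)] that by (auto intro: cInf_lower)
  have dXge: "c \<le> dX p" if "\<And>x. x \<in> X \<Longrightarrow> c \<le> \<delta> p x" for c p
    unfolding dX_def using Xne that by (auto intro: cInf_greatest)
  have dYge: "c \<le> dY p" if "\<And>y. y \<in> Y \<Longrightarrow> c \<le> \<delta> p y" for c p
    unfolding dY_def using Yne that by (auto intro: cInf_greatest)
  have dX01: "0 \<le> dX p \<and> dX p \<le> 1" if "p \<in> M" for p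
  proof -
    obtain x where "x \<in> X" using Xne by auto
    note x = this
    have "0 \<le> dX p" by (rule dXge) (use nn that XM in blast)
    moreover have "\<delta> p x \<le> 1" using le1 that XM x by blast
    ultimately show ?thesis using dXle[OF that x] by linarith
  qed
  have dY01: "0 \<le> dY p \<and> dY p \<le> 1" if "p \<in> M" for p
  proof -
    obtain y where "y \<in> Y" using Yne by auto
    note y = this
    have "0 \<le> dY p" by (rule dYge) (use nn that YM in blast)
    moreover have "\<delta> p y \<le> 1" using le1 that YM y by blast
    ultimately show ?thesis using dYle[OF that y] by linarith
  qed
  have dX0: "dX x = 0" if "x \<in> X" for x
  proof -
    have xm: "x \<in> M" using that XM by blast
    show ?thesis using dXle[OF xm that] refl[OF xm] dX01[OF xm] by linarith
  qed
  have dY0: "dY y = 0" if "y \<in> Y" for y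
  proof -
    have ym: "y \<in> M" using that YM by blast
    show ?thesis using dYle[OF ym that] refl[OF ym] dY01[OF ym] by linarith
  qed
  define H1 where "H1 = Sup (dY ` X)"
  define H2 where "H2 = Sup (dX ` Y)"
  have H1u: "dY x \<le> H1" if "x \<in> X" for x
    unfolding H1_def using that dY01 XM by (auto intro!: cSup_upper bdd_aboveI[where M=1])
  have H2u: "dX y \<le> H2" if "y \<in> Y" for y
    unfolding H2_def using that dX01 YM by (auto intro!: cSup_upper bdd_aboveI[where M=1])
  have hd: "hausdorff \<delta> X Y = max H1 H2"
    unfolding hausdorff_def sup0_def inf1_def H1_def H2_def dX_def dY_def using Xne Yne by auto
  have rhs: "(SUP p\<in>M. \<bar>(1 - inf1 (\<delta> p ` X)) - (1 - inf1 (\<delta> p ` Y))\<bar>) = (SUP p\<in>M. \<bar>dX p - dY p\<bar>)"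
    unfolding inf1_def dX_def dY_def using Xne Yne by (intro SUP_cong) auto
  have bdd: "bdd_above ((\<lambda>p. \<bar>dX p - dY p\<bar>) ` M)"
  proof (rule bdd_aboveI[where M=1])
    fix v assume "v \<in> (\<lambda>p. \<bar>dX p - dY p\<bar>) ` M"
    then obtain p where p: "p \<in> M" "v = \<bar>dX p - dY p\<bar>" by blast
    show "v \<le> 1" using dX01[OF p(1)] dY01[OF p(1)] p(2) by linarith
  qed
  have A: "\<bar>dX p - dY p\<bar> \<le> max H1 H2" if p: "p \<in> M" for p
  proof -
    have "dX p - max H1 H2 \<le> dY p"
    proof (rule dYge)
      fix y assume y: "y \<in> Y"
      have "dX p - \<delta> p y \<le> dX y"
      proof (rule dXge)
        fix x assume x: "x \<in> X"
        have "y \<in> M" "x \<in> M" using x y XM YM by blast+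
        then show "dX p - \<delta> p y \<le> \<delta> y x" using dXle[OF p x] tri[OF p, of y x] by linarith
      qed
      then show "dX p - max H1 H2 \<le> \<delta> p y" using H2u[OF y] by linarith
    qed
    moreover have "dY p - max H1 H2 \<le> dX p"
    proof (rule dXge)
      fix x assume x: "x \<in> X"
      have "dY p - \<delta> p x \<le> dY x"
      proof (rule dYge)
        fix y assume y: "y \<in> Y"
        have "y \<in> M" "x \<in> M" using x y XM YM by blast+
        then show "dY p - \<delta> p x \<le> \<delta> x y" using dYle[OF p y] tri[OF p, of x y] by linarith
      qed
      then show "dY p - max H1 H2 \<le> \<delta> p x" using H1u[OF x] by linarith
    qed
    ultimately show ?thesis by linarith
  qed
  have B1: "H1 \<le> (SUP p\<in>M. \<bar>dX p - dY p\<bar>)"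
    unfolding H1_def
  proof (rule cSup_least)
    show "dY ` X \<noteq> {}" using Xne by auto
    fix v assume "v \<in> dY ` X"
    then obtain x where x: "x \<in> X" "v = dY x" by auto
    have "\<bar>dX x - dY x\<bar> \<le> (SUP p\<in>M. \<bar>dX p - dY p\<bar>)" using x XM bdd by (auto intro!: cSUP_upper)
    then show "v \<le> (SUP p\<in>M. \<bar>dX p - dY p\<bar>)" using x dX0 dY01 XM by auto
  qed
  have B2: "H2 \<le> (SUP p\<in>M. \<bar>dX p - dY p\<bar>)"
    unfolding H2_def
  proof (rule cSup_least)
    show "dX ` Y \<noteq> {}" using Yne by auto
    fix v assume "v \<in> dX ` Y"
    then obtain y where y: "y \<in> Y" "v = dX y" by auto
    have "\<bar>dX y - dY y\<bar> \<le> (SUP p\<in>M. \<bar>dX p - dY p\<bar>)" using y YM bdd by (auto intro!: cSUP_upper)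
    then show "v \<le> (SUP p\<in>M. \<bar>dX p - dY p\<bar>)" using y dY0 dX01 YM by auto
  qed
  have "(SUP p\<in>M. \<bar>dX p - dY p\<bar>) \<le> max H1 H2" using Mne A by (intro cSUP_least) auto
  then show ?thesis unfolding hd rhs using B1 B2 by linarith
qed



fun fml :: "'a list \<Rightarrow> 'a tformula" where
  "fml [] = TTop"
| "fml (a # \<alpha>) = Diam a (fml \<alpha>)"

fun trc :: "'a tformula \<Rightarrow> 'a list" where
  "trc TTop = []"
| "trc (Diam a \<Phi>) = a # trc \<Phi>"

lemma trc_fml[simp]: "trc (fml \<alpha>) = \<alpha>" by (induction \<alpha>) auto
lemma fml_trc[simp]: "fml (trc \<Phi>) = \<Phi>" by (induction \<Phi>) auto

lemma sat_iff: "(comp_sat c \<Phi> \<and> length c = depth \<Phi>) \<longleftrightarrow> comp_trace c = trc \<Phi>"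
proof (induction \<Phi> arbitrary: c)
  case TTop then show ?case by (simp add: comp_trace_def)
next
  case (Diam a \<Phi>)
  show ?case
  proof (cases c)
    case Nil then show ?thesis by (simp add: comp_trace_def)
  next
    case (Cons x c')
    obtain b \<pi> z where x: "x = (b, \<pi>, z)" by (cases x) blast
    have "(comp_sat c' \<Phi> \<and> length c' = depth \<Phi>) \<longleftrightarrow> comp_trace c' = trc \<Phi>" by (rule Diam.IH)
    then show ?thesis unfolding Cons x by (simp add: comp_trace_def)
  qed
qed

lemma res_Cmax:
  assumes fs: "pts_fin_supp tr" and fp: "finite_process tr u" and R: "R \<in> res tr u"
  shows "finite (Cmax (res_trans R) (res_init R)) \<and> set_prob (Cmax (res_trans R) (res_init R)) = 1"
proof -
  obtain Z trZ corr z0 where Rd: "R = (Z, trZ, corr, z0)" by (metis prod_cases4)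
  have ir: "is_resolution tr u (Z, trZ, corr, z0)" using R Rd by (simp add: res_def)
  have c0: "corr z0 = u" using ir by (simp add: is_resolution_def)
  have T1: "\<forall>(z, a, \<pi>) \<in> trZ. \<exists>\<pi>'. (corr z, a, \<pi>') \<in> tr \<and> (\<forall>z' \<in> set_pmf \<pi>. pmf \<pi> z' = pmf \<pi>' (corr z'))"
    using ir by (simp add: is_resolution_def)
  have U: "\<forall>z a \<pi> b \<rho>. (z, a, \<pi>) \<in> trZ \<longrightarrow> (z, b, \<rho>) \<in> trZ \<longrightarrow> a = b \<and> \<pi> = \<rho>"
    using ir by (simp add: is_resolution_def)
  have "finite (Cmax trZ z0) \<and> sum comp_prob (Cmax trZ z0) = 1"
    using Cmax_sum_acc[OF fs T1 U acc_from_finite[OF fp]] c0 by blast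
  then show ?thesis using Rd by (simp add: res_trans_def res_init_def set_prob_def)
qed

definition TS :: "('s, 'a) resolution \<Rightarrow> 'a list set" where
  "TS R = comp_trace ` Cmax (res_trans R) (res_init R)"

lemma TD_props:
  assumes fs: "pts_fin_supp tr" and fp: "finite_process tr u" and R: "R \<in> res tr u"
  shows "finite (TS R)" "\<And>\<alpha>. 0 \<le> TD R \<alpha>" "\<And>\<alpha>. \<alpha> \<notin> TS R \<Longrightarrow> TD R \<alpha> = 0" "sum (TD R) (TS R) = 1"
proof -
  let ?C = "Cmax (res_trans R) (res_init R)"
  have C: "finite ?C" "sum comp_prob ?C = 1" using res_Cmax[OF fs fp R] by (auto simp: set_prob_def)
  show "finite (TS R)" using C by (simp add: TS_def)
  show "0 \<le> TD R \<alpha>" for \<alpha>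
    by (simp add: TD_def set_prob_def Cmax_tr_def sum_nonneg comp_prob_nonneg)
  show "\<alpha> \<notin> TS R \<Longrightarrow> TD R \<alpha> = 0" for \<alpha>
  proof -
    assume "\<alpha> \<notin> TS R"
    then have "Cmax_tr (res_trans R) (res_init R) \<alpha> = {}" by (auto simp: TS_def Cmax_tr_def)
    then show ?thesis by (simp add: TD_def set_prob_def)
  qed
  have "sum comp_prob ?C = (\<Sum>\<alpha>\<in>TS R. sum comp_prob {c \<in> ?C. comp_trace c = \<alpha>})"
    unfolding TS_def by (rule sum.image_gen[OF C(1)])
  also have "\<dots> = sum (TD R) (TS R)"
    by (simp add: TD_def set_prob_def Cmax_tr_def)
  finally show "sum (TD R) (TS R) = 1" using C by simp
qed

definition PsiR :: "('s, 'a) resolution \<Rightarrow> 'a tformula pmf" where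
  "PsiR R = embed_pmf (\<lambda>\<Phi>. TD R (trc \<Phi>))"

lemma sum_fml: "sum f (fml ` A) = sum (\<lambda>\<alpha>. f (fml \<alpha>)) A"
proof -
  have "inj_on fml A" by (rule inj_on_inverseI[where g=trc]) simp
  then show ?thesis using sum.reindex[of fml A f] by (simp add: comp_def)
qed

lemma TD_out:
  assumes fs: "pts_fin_supp tr" and fp: "finite_process tr u" and R: "R \<in> res tr u"
    and "\<Phi> \<notin> fml ` TS R"
  shows "TD R (trc \<Phi>) = 0"
proof -
  have "trc \<Phi> \<notin> TS R"
  proof
    assume "trc \<Phi> \<in> TS R"
    then have "fml (trc \<Phi>) \<in> fml ` TS R" by (rule imageI)
    then show False using assms(4) by simp
  qed
  then show ?thesis by (rule TD_props(3)[OF fs fp R])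
qed

lemma PsiR_props:
  assumes fs: "pts_fin_supp tr" and fp: "finite_process tr u" and R: "R \<in> res tr u"
  shows "pmf (PsiR R) \<Phi> = TD R (trc \<Phi>)" "PsiR R \<in> Ld" "set_pmf (PsiR R) \<subseteq> fml ` TS R"
proof -
  note P = TD_props[OF fs fp R]
  have out: "TD R (trc \<Phi>) = 0" if "\<Phi> \<notin> fml ` TS R" for \<Phi>
  proof -
    have "trc \<Phi> \<notin> TS R"
    proof
      assume "trc \<Phi> \<in> TS R"
      then have "fml (trc \<Phi>) \<in> fml ` TS R" by (rule imageI)
      then show False using that by simp
    qed
    then show ?thesis by (rule P(3))
  qed
  have "(\<integral>\<^sup>+\<Phi>. ennreal (TD R (trc \<Phi>)) \<partial>count_space UNIV) = (\<Sum>\<Phi>\<in>fml ` TS R. ennreal (TD R (trc \<Phi>)))"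
    by (rule nn_integral_count_space') (use P(1) out in auto)
  also have "\<dots> = ennreal (\<Sum>\<Phi>\<in>fml ` TS R. TD R (trc \<Phi>))" using P(2) by simp
  also have "\<dots> = 1" by (simp add: sum_fml P(4))
  finally have int1: "(\<integral>\<^sup>+\<Phi>. ennreal (TD R (trc \<Phi>)) \<partial>count_space UNIV) = 1" .
  show pm: "pmf (PsiR R) \<Phi> = TD R (trc \<Phi>)" for \<Phi>
    unfolding PsiR_def by (rule pmf_embed_pmf) (use P(2) int1 in auto)
  show sub: "set_pmf (PsiR R) \<subseteq> fml ` TS R"
  proof
    fix \<Phi> assume "\<Phi> \<in> set_pmf (PsiR R)"
    then have "TD R (trc \<Phi>) \<noteq> 0" by (simp add: set_pmf_iff pm)
    then show "\<Phi> \<in> fml ` TS R" using out by blast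
  qed
  show "PsiR R \<in> Ld" unfolding Ld_def using finite_subset[OF sub] P(1) by auto
qed

lemma Cmax_sat_eq:
  "{c \<in> Cmax trZ z. comp_sat c \<Phi> \<and> length c = depth \<Phi>} = Cmax_tr trZ z (trc \<Phi>)"
  by (auto simp: Cmax_tr_def sat_iff)

lemma Lsat_eq:
  assumes fs: "pts_fin_supp tr" and fp: "finite_process tr u"
  shows "Lsat tr u = PsiR ` res tr u"
proof
  show "PsiR ` res tr u \<subseteq> Lsat tr u"
  proof
    fix \<Psi> assume "\<Psi> \<in> PsiR ` res tr u"
    then obtain R where R: "R \<in> res tr u" "\<Psi> = PsiR R" by blast
    note P = PsiR_props[OF fs fp R(1)]
    show "\<Psi> \<in> Lsat tr u" unfolding Lsat_def sat_dist_def
      using R P by (auto simp: Cmax_sat_eq TD_def intro!: bexI[of _ R])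
  qed
next
  show "Lsat tr u \<subseteq> PsiR ` res tr u"
  proof
    fix \<Psi> assume "\<Psi> \<in> Lsat tr u"
    then obtain R where R: "R \<in> res tr u" and L: "\<Psi> \<in> Ld"
      and eq: "\<forall>\<Phi> \<in> set_pmf \<Psi>. TD R (trc \<Phi>) = pmf \<Psi> \<Phi>"
      unfolding Lsat_def sat_dist_def by (auto simp: Cmax_sat_eq TD_def)
    note P = PsiR_props[OF fs fp R]
    note T = TD_props[OF fs fp R]
    define A where "A = fml ` TS R \<union> set_pmf \<Psi>"
    have finA: "finite A" using T(1) L by (auto simp: A_def Ld_def)
    have s1: "(\<Sum>\<Phi>\<in>A. TD R (trc \<Phi>)) = 1"
    proof -
      have "(\<Sum>\<Phi>\<in>A. TD R (trc \<Phi>)) = (\<Sum>\<Phi>\<in>fml ` TS R. TD R (trc \<Phi>))"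
        by (rule sum.mono_neutral_right) (use finA TD_out[OF fs fp R] in \<open>auto simp: A_def\<close>)
      then show ?thesis by (simp add: sum_fml T(4))
    qed
    have s2: "(\<Sum>\<Phi>\<in>set_pmf \<Psi>. TD R (trc \<Phi>)) = 1"
      using eq L by (simp add: Ld_def sum_pmf_eq_1)
    have "(\<Sum>\<Phi>\<in>A - set_pmf \<Psi>. TD R (trc \<Phi>)) = 0"
      using sum.subset_diff[of "set_pmf \<Psi>" A "\<lambda>\<Phi>. TD R (trc \<Phi>)"] finA s1 s2 by (auto simp: A_def)
    then have z: "TD R (trc \<Phi>) = 0" if "\<Phi> \<in> A - set_pmf \<Psi>" for \<Phi>
      using sum_nonneg_eq_0_iff[of "A - set_pmf \<Psi>" "\<lambda>\<Phi>. TD R (trc \<Phi>)"] finA T(2) that by auto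
    have "\<Psi> = PsiR R"
    proof (rule pmf_eqI)
      fix \<Phi>
      show "pmf \<Psi> \<Phi> = pmf (PsiR R) \<Phi>"
      proof (cases "\<Phi> \<in> set_pmf \<Psi>")
        case True then show ?thesis using eq P(1) by simp
      next
        case False
        then have "pmf \<Psi> \<Phi> = 0" by (simp add: set_pmf_iff)
        moreover have "TD R (trc \<Phi>) = 0"
        proof (cases "\<Phi> \<in> A")
          case True then show ?thesis using z False by blast
        next
          case False
          have "trc \<Phi> \<notin> TS R"
          proof
            assume "trc \<Phi> \<in> TS R"
            then have "fml (trc \<Phi>) \<in> A" unfolding A_def by blast
            then show False using False by simp
          qed
          then show ?thesis by (rule T(3))
        qed
        ultimately show ?thesis using P(1) by simp
      qed
    qed
    then show "\<Psi> \<in> PsiR ` res tr u" using R by blast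
  qed
qed

lemma d_form_eq: "d_form = (\<lambda>x y. if x = y then 0 else 1)" by (simp add: fun_eq_iff d_form_def)
lemma d_trace_eq: "d_trace = (\<lambda>x y. if x = y then 0 else 1)" by (simp add: fun_eq_iff d_trace_def)

lemma D_form_tv:
  assumes "set_pmf P1 \<subseteq> S" "set_pmf P2 \<subseteq> S" "finite S"
  shows "D_form P1 P2 = 1 - (\<Sum>x\<in>S. min (pmf P1 x) (pmf P2 x))"
  unfolding D_form_def
  by (rule kantorovich_tv[OF d_form_eq assms(3)]) (use assms in \<open>auto simp: set_pmf_iff sum_pmf_eq_1\<close>)

lemma D_T_eq:
  assumes fs: "pts_fin_supp tr" and fp1: "finite_process tr s" and fp2: "finite_process tr t"
    and R1: "R1 \<in> res tr s" and R2: "R2 \<in> res tr t"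
  shows "D_T R1 R2 = D_form (PsiR R1) (PsiR R2)"
proof -
  note T1 = TD_props[OF fs fp1 R1] and T2 = TD_props[OF fs fp2 R2]
  note P1 = PsiR_props[OF fs fp1 R1] and P2 = PsiR_props[OF fs fp2 R2]
  let ?S = "TS R1 \<union> TS R2"
  have "D_T R1 R2 = 1 - (\<Sum>\<alpha>\<in>?S. min (TD R1 \<alpha>) (TD R2 \<alpha>))"
    unfolding D_T_def
  proof (rule kantorovich_tv[OF d_trace_eq])
    show "finite ?S" using T1 T2 by simp
    show "sum (TD R1) ?S = 1"
      using sum.mono_neutral_right[of ?S "TS R1" "TD R1"] T1 T2 by simp
    show "sum (TD R2) ?S = 1"
      using sum.mono_neutral_right[of ?S "TS R2" "TD R2"] T1 T2 by simp
  qed (use T1 T2 in auto)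
  also have "\<dots> = D_form (PsiR R1) (PsiR R2)"
  proof -
    have f: "finite (fml ` ?S)" using T1 T2 by simp
    have "D_form (PsiR R1) (PsiR R2) = 1 - (\<Sum>\<Phi>\<in>fml ` ?S. min (pmf (PsiR R1) \<Phi>) (pmf (PsiR R2) \<Phi>))"
      by (rule D_form_tv) (use P1(3) P2(3) f in blast)+
    also have "\<dots> = 1 - (\<Sum>\<alpha>\<in>?S. min (TD R1 \<alpha>) (TD R2 \<alpha>))"
      by (simp add: sum_fml P1(1) P2(1))
    finally show ?thesis by simp
  qed
  finally show ?thesis .
qed

lemma D_form_metric:
  assumes "P1 \<in> Ld" "P2 \<in> Ld" "P3 \<in> Ld"
  shows "D_form P1 P1 = 0" "0 \<le> D_form P1 P2" "D_form P1 P2 \<le> 1"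
    "D_form P1 P3 \<le> D_form P1 P2 + D_form P2 P3"
proof -
  define S where "S = set_pmf P1 \<union> set_pmf P2 \<union> set_pmf P3"
  have S: "finite S" "set_pmf P1 \<subseteq> S" "set_pmf P2 \<subseteq> S" "set_pmf P3 \<subseteq> S"
    using assms by (auto simp: S_def Ld_def)
  have s1: "sum (pmf P1) S = 1" "sum (pmf P2) S = 1" using S by (auto intro: sum_pmf_eq_1)
  show "D_form P1 P1 = 0" using D_form_tv[OF S(2) S(2) S(1)] s1 by simp
  have "(\<Sum>x\<in>S. min (pmf P1 x) (pmf P2 x)) \<le> sum (pmf P1) S" by (rule sum_mono) simp
  then show "0 \<le> D_form P1 P2" using D_form_tv[OF S(2) S(3) S(1)] s1 by simp
  have "0 \<le> (\<Sum>x\<in>S. min (pmf P1 x) (pmf P2 x))" by (rule sum_nonneg) simp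
  then show "D_form P1 P2 \<le> 1" using D_form_tv[OF S(2) S(3) S(1)] by simp
  have "(\<Sum>x\<in>S. min (pmf P1 x) (pmf P2 x)) + (\<Sum>x\<in>S. min (pmf P2 x) (pmf P3 x))
      \<le> sum (pmf P2) S + (\<Sum>x\<in>S. min (pmf P1 x) (pmf P3 x))"
    unfolding sum.distrib[symmetric] by (rule sum_mono) (auto simp: min_def)
  then show "D_form P1 P3 \<le> D_form P1 P2 + D_form P2 P3"
    using D_form_tv[OF S(2) S(3) S(1)] D_form_tv[OF S(3) S(4) S(1)] D_form_tv[OF S(2) S(4) S(1)] s1
    by simp
qed

lemma res_ne: "({0}, {}, \<lambda>_. s, 0) \<in> res tr s"
  by (simp add: res_def is_resolution_def)

theorem theorem20:
  fixes tr :: "('s, 'a) pts" and s t :: 's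
  assumes "pts_fin_supp tr"
    and "finite_process tr s" and "finite_process tr t"
  shows "strong_trace_metric tr s t = (SUP \<Psi>\<in>Ld. \<bar>sem tr \<Psi> s - sem tr \<Psi> t\<bar>)"
proof -
  note fs = assms(1)
  let ?X = "PsiR ` res tr s" and ?Y = "PsiR ` res tr t"
  have XM: "?X \<subseteq> Ld" using PsiR_props(2)[OF fs assms(2)] by blast
  have YM: "?Y \<subseteq> Ld" using PsiR_props(2)[OF fs assms(3)] by blast
  have ne: "?X \<noteq> {}" "?Y \<noteq> {}" using res_ne[of s tr] res_ne[of t tr] by blast+
  have e1: "(\<lambda>R1. inf1 ((\<lambda>R2. D_T R1 R2) ` res tr t)) ` res tr s = (\<lambda>x. inf1 ((\<lambda>y. D_form x y) ` ?Y)) ` ?X"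
    unfolding image_image
  proof (rule image_cong[OF refl])
    fix R1 assume R1: "R1 \<in> res tr s"
    show "inf1 ((\<lambda>R2. D_T R1 R2) ` res tr t) = inf1 ((\<lambda>R2. D_form (PsiR R1) (PsiR R2)) ` res tr t)"
      by (rule arg_cong[where f=inf1], rule image_cong[OF refl], rule D_T_eq[OF fs assms(2,3) R1])
  qed
  have e2: "(\<lambda>R2. inf1 ((\<lambda>R1. D_T R2 R1) ` res tr s)) ` res tr t = (\<lambda>y. inf1 ((\<lambda>x. D_form y x) ` ?X)) ` ?Y"
    unfolding image_image
  proof (rule image_cong[OF refl])
    fix R2 assume R2: "R2 \<in> res tr t"
    show "inf1 ((\<lambda>R1. D_T R2 R1) ` res tr s) = inf1 ((\<lambda>R1. D_form (PsiR R2) (PsiR R1)) ` res tr s)"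
      by (rule arg_cong[where f=inf1], rule image_cong[OF refl], rule D_T_eq[OF fs assms(3,2) R2])
  qed
  have lhs: "strong_trace_metric tr s t = hausdorff D_form ?X ?Y"
    unfolding strong_trace_metric_def hausdorff_def e1 e2 ..
  have sem: "sem tr \<Psi> u = 1 - inf1 (D_form \<Psi> ` PsiR ` res tr u)" if "finite_process tr u" for \<Psi> u
    unfolding sem_def D_set_def Lsat_eq[OF fs that] ..
  show ?thesis
    unfolding lhs sem[OF assms(2)] sem[OF assms(3)]
  proof (rule hausdorff_sup[OF XM YM ne])
    show "\<And>x. x \<in> Ld \<Longrightarrow> D_form x x = 0" by (rule D_form_metric(1))
    show "\<And>x y. x \<in> Ld \<Longrightarrow> y \<in> Ld \<Longrightarrow> 0 \<le> D_form x y" by (rule D_form_metric(2))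
    show "\<And>x y. x \<in> Ld \<Longrightarrow> y \<in> Ld \<Longrightarrow> D_form x y \<le> 1" by (rule D_form_metric(3))
    show "\<And>x y z. x \<in> Ld \<Longrightarrow> y \<in> Ld \<Longrightarrow> z \<in> Ld \<Longrightarrow> D_form x z \<le> D_form x y + D_form y z"
      by (rule D_form_metric(4))
  qed
qed


end
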